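(* Let $(A,\varphi,\phi_A,[\cdot,\cdot]_A,a_A,K,\langle\cdot,\cdot\rangle)$ be a para-Kähler hom-Lie algebroid with hom-Levi-Civita connection $\nabla$, and identify $A^{-1}$ with $(A^1)^*$ via $\langle\cdot,\cdot\rangle$ (so $\phi_{A^{-1}}$ corresponds to $\phi_{(A^1)^*}:=(\phi_{A^1})^\dagger$). Then: (i) $X\mapsto\nabla_X|_{\Gamma(A^1)}$, $X\in\Gamma(A^1)$, is a representation of the hom-Lie algebroid $A^1$ on $(A^1,\varphi,\phi_{A^1})$ with respect to $\phi_{A^1}$; (ii) $\alpha\mapsto\nabla_\alpha|_{\Gamma((A^1)^* )}$, $\alpha\in\Gamma((A^1)^* )\cong\Gamma(A^{-1})$, is a representation of the hom-Lie algebroid $(A^1)^*\cong A^{-1}$ on $((A^1)^*,\varphi,\phi_{(A^1)^*})$ with respect to $\phi_{(A^1)^*}$.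
   Context: Standing conventions. $M$ is a smooth manifold, $\varphi:M\to M$ a diffeomorphism, $\varphi^*f=f\circ\varphi$. A hom-bundle $(A\to M,\varphi,\phi_A)$ is a vector bundle $A\to M$ together with an invertible $\mathbb R$-linear map $\phi_A:\Gamma(A)\to\Gamma(A)$ with $\phi_A(fX)=\varphi^*(f)\phi_A(X)$. $\varphi^!TM$ is the pullback bundle; its sections are identified with $\mathbb R$-linear maps $D:C^\infty(M)\to C^\infty(M)$ with $D(fg)=D(f)\varphi^*(g)+\varphi^*(f)D(g)$. A hom-Lie algebroid $(A,\varphi,\phi_A,[\cdot,\cdot]_A,a_A)$ consists of a hom-bundle, a skew-symmetric $\mathbb R$-bilinear bracket on $\Gamma(A)$ with $\phi_A[X,Y]_A=[\phi_A X,\phi_A Y]_A$ and $[\phi_A(X),[Y,Z]_A]_A+[\phi_A(Y),[Z,X]_A]_A+[\phi_A(Z),[X,Y]_A]_A=0$, and a bundle map $a_A:A\to\varphi^!TM$ such that $[X,fY]_A=\varphi^*(f)[X,Y]_A+a_A(\phi_A(X))(f)\phi_A(Y)$, $\varphi^*\circ a_A(X)=a_A(\phi_A(X))\circ\varphi^*$, and $a_A([X,Y]_A)\circ\varphi^*=a_A(\phi_AX)\circ a_A(Y)-a_A(\phi_AY)\circ a_A(X)$. For a hom-bundle $(E,\varphi,\phi_E)$, $\phi_E^\dagger$ on $\Gamma(E^* )$ is $\langle\phi_E^\dagger\xi,e\rangle=\varphi^*\langle\xi,\phi_E^{-1}e\rangle$. Pseudo-Riemannian metric: a symmetric nondegenerate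 bilinear form $\langle\cdot,\cdot\rangle$ on $A$ with $\langle\phi_AX,\phi_AY\rangle=\varphi^*\langle X,Y\rangle$. The hom-Levi-Civita connection is the unique $\mathbb R$-bilinear $\nabla:\Gamma(A)\times\Gamma(A)\to\Gamma(A)$ with $\nabla_{fX}Y=\varphi^*(f)\nabla_XY$, $\nabla_X(fY)=\varphi^*(f)\nabla_XY+a_A(\phi_AX)(f)\phi_A(Y)$, $[X,Y]_A=\nabla_XY-\nabla_YX$, and $a_A(\phi_AX)\langle Y,Z\rangle=\langle\nabla_XY,\phi_AZ\rangle+\langle\phi_AY,\nabla_XZ\rangle$. An almost para-complex structure is an invertible map $K:\Gamma(A)\to\Gamma(A)$ with $(\phi_A\circ K)^2=\mathrm{Id}$, $\phi_A\circ K=K\circ\phi_A$, and such that $A^1=\ker(\phi_A\circ K-\mathrm{Id})$ and $A^{-1}=\ker(\phi_A\circ K+\mathrm{Id})$ have the same rank. $(K,\langle\cdot,\cdot\rangle)$ is almost para-Hermitian if $\langle(\phi_A\circ K)X,(\phi_A\circ K)Y\rangle=-\langle X,Y\rangle$. A para-Kähler hom-Lie algebroid is an almost para-Hermitian hom-Lie algebroid with $\nabla_X\phi_A(KY)=\phi_A(K(\nabla_XY))$ for all $X,Y$. In this situation $A^1$ and $A^{-1}$ are $\phi_A$-invariant, closed under $[\cdot,\cdot]_A$ and $\nabla$, and are hom-Lie algebroids with the restricted structures; $A^{-1}\to(A^1)^*$, $\bar X\mapsto\langle\bar X,\cdot\rangle|_{A^1}$ is an isomorphism. Representation: given a hom-Lie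 algebroid $B$, a hom-bundle $(E,\varphi,\phi_E)$ and invertible $\mu:\Gamma(E)\to\Gamma(E)$ with $\mu(fe)=\varphi^*(f)\mu(e)$, a representation of $B$ on $E$ w.r.t. $\mu$ is an assignment $X\mapsto\rho(X)$ of $\mathbb R$-linear maps $\Gamma(E)\to\Gamma(E)$, with $\rho(fX)=\varphi^*(f)\rho(X)$, such that $\rho(X)(fe)=\varphi^*(f)\rho(X)e+a_B(\phi_B(X))(f)\mu(e)$, $\rho(\phi_B(X))\circ\mu=\mu\circ\rho(X)$, and $\rho([X,Y]_B)\circ\mu=\rho(\phi_B(X))\circ\rho(Y)-\rho(\phi_B(Y))\circ\rho(X)$. *)

theory Defs
  imports "HOL-Analysis.Analysis"
begin

text \<open>Points of M form a type 'm; C^infty(M) is modelled by a set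
  C of real functions on M; sections of a vector bundle are functions
  'm => 'v into a finite-dimensional real vector space 'v (ambient space containing
  all fibres); Gamma(A) is a set of such functions.\<close>

definition pb :: "('m \<Rightarrow> 'm) \<Rightarrow> ('m \<Rightarrow> real) \<Rightarrow> ('m \<Rightarrow> real)" where
  "pb \<phi> f = f \<circ> \<phi>"

definition ssm :: "('m \<Rightarrow> real) \<Rightarrow> ('m \<Rightarrow> 'v::real_vector) \<Rightarrow> ('m \<Rightarrow> 'v)" where
  "ssm f X = (\<lambda>x. f x *\<^sub>R X x)"

definition sadd :: "('m \<Rightarrow> 'v::real_vector) \<Rightarrow> ('m \<Rightarrow> 'v) \<Rightarrow> ('m \<Rightarrow> 'v)" where
  "sadd X Y = (\<lambda>x. X x + Y x)"

definition sneg :: "('m \<Rightarrow> 'v::real_vector) \<Rightarrow> ('m \<Rightarrow> 'v)" where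
  "sneg X = (\<lambda>x. - X x)"

definition szero :: "'m \<Rightarrow> 'v::real_vector" where
  "szero = (\<lambda>x. 0)"

definition fib :: "('m \<Rightarrow> 'v) set \<Rightarrow> 'm \<Rightarrow> 'v set" where
  "fib \<Gamma> x = (\<lambda>X. X x) ` \<Gamma>"

text \<open>C plays the role of C^infty(M), phi is a diffeomorphism: phi^* and (phi^-1)^* preserve C.\<close>
definition smooth_setting :: "('m \<Rightarrow> real) set \<Rightarrow> ('m \<Rightarrow> 'm) \<Rightarrow> bool" where
  "smooth_setting C \<phi> \<longleftrightarrow>
     (\<forall>c. (\<lambda>_. c) \<in> C) \<and>
     (\<forall>f\<in>C. \<forall>g\<in>C. (\<lambda>x. f x + g x) \<in> C \<and> (\<lambda>x. f x * g x) \<in> C) \<and>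
     (\<forall>f\<in>C. (\<lambda>x. - f x) \<in> C) \<and>
     bij \<phi> \<and> (\<forall>f\<in>C. pb \<phi> f \<in> C \<and> pb (inv \<phi>) f \<in> C)"

definition vbundle :: "('m \<Rightarrow> real) set \<Rightarrow> ('m \<Rightarrow> 'v::euclidean_space) set \<Rightarrow> bool" where
  "vbundle C \<Gamma> \<longleftrightarrow> szero \<in> \<Gamma> \<and> (\<forall>X\<in>\<Gamma>. \<forall>Y\<in>\<Gamma>. sadd X Y \<in> \<Gamma>) \<and>
     (\<forall>f\<in>C. \<forall>X\<in>\<Gamma>. ssm f X \<in> \<Gamma>)"

definition hom_bundle ::
  "('m \<Rightarrow> real) set \<Rightarrow> ('m \<Rightarrow> 'm) \<Rightarrow> ('m \<Rightarrow> 'v::euclidean_space) set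
   \<Rightarrow> (('m \<Rightarrow> 'v) \<Rightarrow> ('m \<Rightarrow> 'v)) \<Rightarrow> bool" where
  "hom_bundle C \<phi> \<Gamma> \<Phi> \<longleftrightarrow> vbundle C \<Gamma> \<and> bij_betw \<Phi> \<Gamma> \<Gamma> \<and>
     (\<forall>X\<in>\<Gamma>. \<forall>Y\<in>\<Gamma>. \<Phi> (sadd X Y) = sadd (\<Phi> X) (\<Phi> Y)) \<and>
     (\<forall>f\<in>C. \<forall>X\<in>\<Gamma>. \<Phi> (ssm f X) = ssm (pb \<phi> f) (\<Phi> X))"

text \<open>Sections of phi^! TM: R-linear maps D on C^infty(M) with
  D(fg) = D(f) phi^*(g) + phi^*(f) D(g).\<close>
definition phi_derivation ::
  "('m \<Rightarrow> real) set \<Rightarrow> ('m \<Rightarrow> 'm) \<Rightarrow> (('m \<Rightarrow> real) \<Rightarrow> ('m \<Rightarrow> real)) \<Rightarrow> bool" where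
  "phi_derivation C \<phi> D \<longleftrightarrow>
     (\<forall>f\<in>C. D f \<in> C) \<and>
     (\<forall>f\<in>C. \<forall>g\<in>C. D (\<lambda>x. f x + g x) = (\<lambda>x. D f x + D g x)) \<and>
     (\<forall>c. \<forall>f\<in>C. D (\<lambda>x. c * f x) = (\<lambda>x. c * D f x)) \<and>
     (\<forall>f\<in>C. \<forall>g\<in>C. D (\<lambda>x. f x * g x) = (\<lambda>x. D f x * pb \<phi> g x + pb \<phi> f x * D g x))"

definition hom_Lie_algebroid ::
  "('m \<Rightarrow> real) set \<Rightarrow> ('m \<Rightarrow> 'm) \<Rightarrow> ('m \<Rightarrow> 'v::euclidean_space) set
   \<Rightarrow> (('m \<Rightarrow> 'v) \<Rightarrow> ('m \<Rightarrow> 'v))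
   \<Rightarrow> (('m \<Rightarrow> 'v) \<Rightarrow> ('m \<Rightarrow> 'v) \<Rightarrow> ('m \<Rightarrow> 'v))
   \<Rightarrow> (('m \<Rightarrow> 'v) \<Rightarrow> ('m \<Rightarrow> real) \<Rightarrow> ('m \<Rightarrow> real)) \<Rightarrow> bool" where
  "hom_Lie_algebroid C \<phi> \<Gamma> \<Phi> br a \<longleftrightarrow>
     hom_bundle C \<phi> \<Gamma> \<Phi> \<and>
     (\<forall>X\<in>\<Gamma>. \<forall>Y\<in>\<Gamma>. br X Y \<in> \<Gamma>) \<and>
     (\<forall>X\<in>\<Gamma>. \<forall>Y\<in>\<Gamma>. br X Y = sneg (br Y X)) \<and>
     (\<forall>X\<in>\<Gamma>. \<forall>Y\<in>\<Gamma>. \<forall>Z\<in>\<Gamma>. br (sadd X Y) Z = sadd (br X Z) (br Y Z)) \<and>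
     (\<forall>X\<in>\<Gamma>. \<forall>Y\<in>\<Gamma>. \<forall>Z\<in>\<Gamma>. br Z (sadd X Y) = sadd (br Z X) (br Z Y)) \<and>
     (\<forall>c. \<forall>X\<in>\<Gamma>. \<forall>Y\<in>\<Gamma>. br (ssm (\<lambda>_. c) X) Y = ssm (\<lambda>_. c) (br X Y)) \<and>
     (\<forall>c. \<forall>X\<in>\<Gamma>. \<forall>Y\<in>\<Gamma>. br X (ssm (\<lambda>_. c) Y) = ssm (\<lambda>_. c) (br X Y)) \<and>
     (\<forall>X\<in>\<Gamma>. \<forall>Y\<in>\<Gamma>. \<Phi> (br X Y) = br (\<Phi> X) (\<Phi> Y)) \<and>
     (\<forall>X\<in>\<Gamma>. \<forall>Y\<in>\<Gamma>. \<forall>Z\<in>\<Gamma>.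
        sadd (sadd (br (\<Phi> X) (br Y Z)) (br (\<Phi> Y) (br Z X))) (br (\<Phi> Z) (br X Y)) = szero) \<and>
     (\<forall>X\<in>\<Gamma>. phi_derivation C \<phi> (a X)) \<and>
     (\<forall>X\<in>\<Gamma>. \<forall>Y\<in>\<Gamma>. \<forall>f\<in>C. a (sadd X Y) f = (\<lambda>x. a X f x + a Y f x)) \<and>
     (\<forall>g\<in>C. \<forall>X\<in>\<Gamma>. \<forall>f\<in>C. a (ssm g X) f = (\<lambda>x. g x * a X f x)) \<and>
     (\<forall>X\<in>\<Gamma>. \<forall>Y\<in>\<Gamma>. \<forall>f\<in>C.
        br X (ssm f Y) = sadd (ssm (pb \<phi> f) (br X Y)) (ssm (a (\<Phi> X) f) (\<Phi> Y))) \<and>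
     (\<forall>X\<in>\<Gamma>. \<forall>f\<in>C. pb \<phi> (a X f) = a (\<Phi> X) (pb \<phi> f)) \<and>
     (\<forall>X\<in>\<Gamma>. \<forall>Y\<in>\<Gamma>. \<forall>f\<in>C.
        a (br X Y) (pb \<phi> f) = (\<lambda>x. a (\<Phi> X) (a Y f) x - a (\<Phi> Y) (a X f) x))"

definition ipr :: "('m \<Rightarrow> 'v \<Rightarrow> 'v \<Rightarrow> real) \<Rightarrow> ('m \<Rightarrow> 'v) \<Rightarrow> ('m \<Rightarrow> 'v) \<Rightarrow> ('m \<Rightarrow> real)" where
  "ipr g X Y = (\<lambda>x. g x (X x) (Y x))"

definition pseudo_metric ::
  "('m \<Rightarrow> real) set \<Rightarrow> ('m \<Rightarrow> 'm) \<Rightarrow> ('m \<Rightarrow> 'v::euclidean_space) set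
   \<Rightarrow> (('m \<Rightarrow> 'v) \<Rightarrow> ('m \<Rightarrow> 'v)) \<Rightarrow> ('m \<Rightarrow> 'v \<Rightarrow> 'v \<Rightarrow> real) \<Rightarrow> bool" where
  "pseudo_metric C \<phi> \<Gamma> \<Phi> g \<longleftrightarrow>
     (\<forall>x. bilinear (g x)) \<and>
     (\<forall>x. \<forall>u\<in>fib \<Gamma> x. \<forall>w\<in>fib \<Gamma> x. g x u w = g x w u) \<and>
     (\<forall>x. \<forall>u\<in>fib \<Gamma> x. (\<forall>w\<in>fib \<Gamma> x. g x u w = 0) \<longrightarrow> u = 0) \<and>
     (\<forall>X\<in>\<Gamma>. \<forall>Y\<in>\<Gamma>. ipr g X Y \<in> C) \<and>
     (\<forall>X\<in>\<Gamma>. \<forall>Y\<in>\<Gamma>. ipr g (\<Phi> X) (\<Phi> Y) = pb \<phi> (ipr g X Y))"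

definition hom_LC_connection ::
  "('m \<Rightarrow> real) set \<Rightarrow> ('m \<Rightarrow> 'm) \<Rightarrow> ('m \<Rightarrow> 'v::euclidean_space) set
   \<Rightarrow> (('m \<Rightarrow> 'v) \<Rightarrow> ('m \<Rightarrow> 'v))
   \<Rightarrow> (('m \<Rightarrow> 'v) \<Rightarrow> ('m \<Rightarrow> 'v) \<Rightarrow> ('m \<Rightarrow> 'v))
   \<Rightarrow> (('m \<Rightarrow> 'v) \<Rightarrow> ('m \<Rightarrow> real) \<Rightarrow> ('m \<Rightarrow> real))
   \<Rightarrow> ('m \<Rightarrow> 'v \<Rightarrow> 'v \<Rightarrow> real)
   \<Rightarrow> (('m \<Rightarrow> 'v) \<Rightarrow> ('m \<Rightarrow> 'v) \<Rightarrow> ('m \<Rightarrow> 'v)) \<Rightarrow> bool" where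
  "hom_LC_connection C \<phi> \<Gamma> \<Phi> br a g nab \<longleftrightarrow>
     (\<forall>X\<in>\<Gamma>. \<forall>Y\<in>\<Gamma>. nab X Y \<in> \<Gamma>) \<and>
     (\<forall>X\<in>\<Gamma>. \<forall>Y\<in>\<Gamma>. \<forall>Z\<in>\<Gamma>. nab (sadd X Y) Z = sadd (nab X Z) (nab Y Z)) \<and>
     (\<forall>X\<in>\<Gamma>. \<forall>Y\<in>\<Gamma>. \<forall>Z\<in>\<Gamma>. nab Z (sadd X Y) = sadd (nab Z X) (nab Z Y)) \<and>
     (\<forall>c. \<forall>X\<in>\<Gamma>. \<forall>Y\<in>\<Gamma>. nab X (ssm (\<lambda>_. c) Y) = ssm (\<lambda>_. c) (nab X Y)) \<and>
     (\<forall>f\<in>C. \<forall>X\<in>\<Gamma>. \<forall>Y\<in>\<Gamma>. nab (ssm f X) Y = ssm (pb \<phi> f) (nab X Y)) \<and>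
     (\<forall>f\<in>C. \<forall>X\<in>\<Gamma>. \<forall>Y\<in>\<Gamma>.
        nab X (ssm f Y) = sadd (ssm (pb \<phi> f) (nab X Y)) (ssm (a (\<Phi> X) f) (\<Phi> Y))) \<and>
     (\<forall>X\<in>\<Gamma>. \<forall>Y\<in>\<Gamma>. br X Y = sadd (nab X Y) (sneg (nab Y X))) \<and>
     (\<forall>X\<in>\<Gamma>. \<forall>Y\<in>\<Gamma>. \<forall>Z\<in>\<Gamma>.
        a (\<Phi> X) (ipr g Y Z) = (\<lambda>x. ipr g (nab X Y) (\<Phi> Z) x + ipr g (\<Phi> Y) (nab X Z) x))"

definition eig_plus :: "('m \<Rightarrow> 'v::real_vector) set \<Rightarrow> (('m \<Rightarrow> 'v) \<Rightarrow> ('m \<Rightarrow> 'v))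
   \<Rightarrow> (('m \<Rightarrow> 'v) \<Rightarrow> ('m \<Rightarrow> 'v)) \<Rightarrow> ('m \<Rightarrow> 'v) set" where
  "eig_plus \<Gamma> \<Phi> K = {X \<in> \<Gamma>. \<Phi> (K X) = X}"

definition eig_minus :: "('m \<Rightarrow> 'v::real_vector) set \<Rightarrow> (('m \<Rightarrow> 'v) \<Rightarrow> ('m \<Rightarrow> 'v))
   \<Rightarrow> (('m \<Rightarrow> 'v) \<Rightarrow> ('m \<Rightarrow> 'v)) \<Rightarrow> ('m \<Rightarrow> 'v) set" where
  "eig_minus \<Gamma> \<Phi> K = {X \<in> \<Gamma>. \<Phi> (K X) = sneg X}"

definition almost_para_complex ::
  "('m \<Rightarrow> real) set \<Rightarrow> ('m \<Rightarrow> 'v::euclidean_space) set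
   \<Rightarrow> (('m \<Rightarrow> 'v) \<Rightarrow> ('m \<Rightarrow> 'v)) \<Rightarrow> (('m \<Rightarrow> 'v) \<Rightarrow> ('m \<Rightarrow> 'v)) \<Rightarrow> bool" where
  "almost_para_complex C \<Gamma> \<Phi> K \<longleftrightarrow>
     bij_betw K \<Gamma> \<Gamma> \<and>
     (\<forall>X\<in>\<Gamma>. \<Phi> (K (\<Phi> (K X))) = X) \<and>
     (\<forall>X\<in>\<Gamma>. \<Phi> (K X) = K (\<Phi> X)) \<and>
     (\<forall>X\<in>\<Gamma>. \<forall>Y\<in>\<Gamma>. \<Phi> (K (sadd X Y)) = sadd (\<Phi> (K X)) (\<Phi> (K Y))) \<and>
     (\<forall>f\<in>C. \<forall>X\<in>\<Gamma>. \<Phi> (K (ssm f X)) = ssm f (\<Phi> (K X))) \<and>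
     (\<forall>x. dim (fib (eig_plus \<Gamma> \<Phi> K) x) = dim (fib (eig_minus \<Gamma> \<Phi> K) x))"

definition para_Kaehler ::
  "('m \<Rightarrow> real) set \<Rightarrow> ('m \<Rightarrow> 'm) \<Rightarrow> ('m \<Rightarrow> 'v::euclidean_space) set
   \<Rightarrow> (('m \<Rightarrow> 'v) \<Rightarrow> ('m \<Rightarrow> 'v))
   \<Rightarrow> (('m \<Rightarrow> 'v) \<Rightarrow> ('m \<Rightarrow> 'v) \<Rightarrow> ('m \<Rightarrow> 'v))
   \<Rightarrow> (('m \<Rightarrow> 'v) \<Rightarrow> ('m \<Rightarrow> real) \<Rightarrow> ('m \<Rightarrow> real))
   \<Rightarrow> (('m \<Rightarrow> 'v) \<Rightarrow> ('m \<Rightarrow> 'v))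
   \<Rightarrow> ('m \<Rightarrow> 'v \<Rightarrow> 'v \<Rightarrow> real)
   \<Rightarrow> (('m \<Rightarrow> 'v) \<Rightarrow> ('m \<Rightarrow> 'v) \<Rightarrow> ('m \<Rightarrow> 'v)) \<Rightarrow> bool" where
  "para_Kaehler C \<phi> \<Gamma> \<Phi> br a K g nab \<longleftrightarrow>
     smooth_setting C \<phi> \<and>
     hom_Lie_algebroid C \<phi> \<Gamma> \<Phi> br a \<and>
     pseudo_metric C \<phi> \<Gamma> \<Phi> g \<and>
     hom_LC_connection C \<phi> \<Gamma> \<Phi> br a g nab \<and>
     almost_para_complex C \<Gamma> \<Phi> K \<and>
     (\<forall>X\<in>\<Gamma>. \<forall>Y\<in>\<Gamma>. ipr g (\<Phi> (K X)) (\<Phi> (K Y)) = (\<lambda>x. - ipr g X Y x)) \<and>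
     (\<forall>X\<in>\<Gamma>. \<forall>Y\<in>\<Gamma>. nab X (\<Phi> (K Y)) = \<Phi> (K (nab X Y)))"

definition hom_representation ::
  "('m \<Rightarrow> real) set \<Rightarrow> ('m \<Rightarrow> 'm) \<Rightarrow> ('m \<Rightarrow> 'v::euclidean_space) set
   \<Rightarrow> (('m \<Rightarrow> 'v) \<Rightarrow> ('m \<Rightarrow> 'v))
   \<Rightarrow> (('m \<Rightarrow> 'v) \<Rightarrow> ('m \<Rightarrow> 'v) \<Rightarrow> ('m \<Rightarrow> 'v))
   \<Rightarrow> (('m \<Rightarrow> 'v) \<Rightarrow> ('m \<Rightarrow> real) \<Rightarrow> ('m \<Rightarrow> real))
   \<Rightarrow> ('m \<Rightarrow> 'w::euclidean_space) set \<Rightarrow> (('m \<Rightarrow> 'w) \<Rightarrow> ('m \<Rightarrow> 'w))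
   \<Rightarrow> (('m \<Rightarrow> 'w) \<Rightarrow> ('m \<Rightarrow> 'w))
   \<Rightarrow> (('m \<Rightarrow> 'v) \<Rightarrow> ('m \<Rightarrow> 'w) \<Rightarrow> ('m \<Rightarrow> 'w)) \<Rightarrow> bool" where
  "hom_representation C \<phi> \<Gamma>B \<Phi>B brB aB \<Gamma>E \<Phi>E \<mu> \<rho> \<longleftrightarrow>
     hom_Lie_algebroid C \<phi> \<Gamma>B \<Phi>B brB aB \<and>
     hom_bundle C \<phi> \<Gamma>E \<Phi>E \<and>
     bij_betw \<mu> \<Gamma>E \<Gamma>E \<and>
     (\<forall>e\<in>\<Gamma>E. \<forall>e'\<in>\<Gamma>E. \<mu> (sadd e e') = sadd (\<mu> e) (\<mu> e')) \<and>
     (\<forall>f\<in>C. \<forall>e\<in>\<Gamma>E. \<mu> (ssm f e) = ssm (pb \<phi> f) (\<mu> e)) \<and>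
     (\<forall>X\<in>\<Gamma>B. \<forall>e\<in>\<Gamma>E. \<rho> X e \<in> \<Gamma>E) \<and>
     (\<forall>X\<in>\<Gamma>B. \<forall>e\<in>\<Gamma>E. \<forall>e'\<in>\<Gamma>E. \<rho> X (sadd e e') = sadd (\<rho> X e) (\<rho> X e')) \<and>
     (\<forall>c. \<forall>X\<in>\<Gamma>B. \<forall>e\<in>\<Gamma>E. \<rho> X (ssm (\<lambda>_. c) e) = ssm (\<lambda>_. c) (\<rho> X e)) \<and>
     (\<forall>f\<in>C. \<forall>X\<in>\<Gamma>B. \<forall>e\<in>\<Gamma>E. \<rho> (ssm f X) e = ssm (pb \<phi> f) (\<rho> X e)) \<and>
     (\<forall>f\<in>C. \<forall>X\<in>\<Gamma>B. \<forall>e\<in>\<Gamma>E.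
        \<rho> X (ssm f e) = sadd (ssm (pb \<phi> f) (\<rho> X e)) (ssm (aB (\<Phi>B X) f) (\<mu> e))) \<and>
     (\<forall>X\<in>\<Gamma>B. \<forall>e\<in>\<Gamma>E. \<rho> (\<Phi>B X) (\<mu> e) = \<mu> (\<rho> X e)) \<and>
     (\<forall>X\<in>\<Gamma>B. \<forall>Y\<in>\<Gamma>B. \<forall>e\<in>\<Gamma>E.
        \<rho> (brB X Y) (\<mu> e) = sadd (\<rho> (\<Phi>B X) (\<rho> Y e)) (sneg (\<rho> (\<Phi>B Y) (\<rho> X e))))"

end

theory Submission imports Defs begin

locale PK =
  fixes C :: "('m \<Rightarrow> real) set" and \<phi> :: "'m \<Rightarrow> 'm"
    and \<Gamma> :: "('m \<Rightarrow> 'v::euclidean_space) set"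
    and \<Phi> :: "('m \<Rightarrow> 'v) \<Rightarrow> ('m \<Rightarrow> 'v)"
    and br :: "('m \<Rightarrow> 'v) \<Rightarrow> ('m \<Rightarrow> 'v) \<Rightarrow> ('m \<Rightarrow> 'v)"
    and a :: "('m \<Rightarrow> 'v) \<Rightarrow> ('m \<Rightarrow> real) \<Rightarrow> ('m \<Rightarrow> real)"
    and K :: "('m \<Rightarrow> 'v) \<Rightarrow> ('m \<Rightarrow> 'v)"
    and g :: "'m \<Rightarrow> 'v \<Rightarrow> 'v \<Rightarrow> real"
    and nab :: "('m \<Rightarrow> 'v) \<Rightarrow> ('m \<Rightarrow> 'v) \<Rightarrow> ('m \<Rightarrow> 'v)"
  assumes PK: "para_Kaehler C \<phi> \<Gamma> \<Phi> br a K g nab"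
begin

lemma sm: "smooth_setting C \<phi>" and HL: "hom_Lie_algebroid C \<phi> \<Gamma> \<Phi> br a"
  and PM: "pseudo_metric C \<phi> \<Gamma> \<Phi> g" and LC: "hom_LC_connection C \<phi> \<Gamma> \<Phi> br a g nab"
  and APC: "almost_para_complex C \<Gamma> \<Phi> K"
  and isoax: "\<And>X Y. X\<in>\<Gamma> \<Longrightarrow> Y\<in>\<Gamma> \<Longrightarrow> ipr g (\<Phi> (K X)) (\<Phi> (K Y)) = (\<lambda>x. - ipr g X Y x)"
  and nabK: "\<And>X Y. X\<in>\<Gamma> \<Longrightarrow> Y\<in>\<Gamma> \<Longrightarrow> nab X (\<Phi> (K Y)) = \<Phi> (K (nab X Y))"
  using PK unfolding para_Kaehler_def by blast+

lemma HB: "hom_bundle C \<phi> \<Gamma> \<Phi>" using HL unfolding hom_Lie_algebroid_def by (elim conjE) metis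
lemma VB: "vbundle C \<Gamma>" using HB unfolding hom_bundle_def by (elim conjE) metis

lemma constC: "(\<lambda>_. c) \<in> C" using sm unfolding smooth_setting_def by (elim conjE) metis
lemma szero_G: "szero \<in> \<Gamma>" using VB unfolding vbundle_def by (elim conjE) metis
lemma sadd_G: "X\<in>\<Gamma> \<Longrightarrow> Y\<in>\<Gamma> \<Longrightarrow> sadd X Y \<in> \<Gamma>" using VB unfolding vbundle_def by (elim conjE) metis
lemma ssm_G: "f\<in>C \<Longrightarrow> X\<in>\<Gamma> \<Longrightarrow> ssm f X \<in> \<Gamma>" using VB unfolding vbundle_def by (elim conjE) metis
lemma sneg_eq: "sneg X = ssm (\<lambda>_. -1) X" by (auto simp: sneg_def ssm_def)
lemma sneg_G: "X\<in>\<Gamma> \<Longrightarrow> sneg X \<in> \<Gamma>" using ssm_G[OF constC] sneg_eq by metis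
lemma Phi_bij: "bij_betw \<Phi> \<Gamma> \<Gamma>" using HB unfolding hom_bundle_def by (elim conjE) metis
lemma Phi_G: "X\<in>\<Gamma> \<Longrightarrow> \<Phi> X \<in> \<Gamma>" using Phi_bij bij_betwE by blast
lemma Phi_surj: "Y\<in>\<Gamma> \<Longrightarrow> \<exists>X\<in>\<Gamma>. Y = \<Phi> X" using Phi_bij by (metis bij_betw_def imageE)
lemma Phi_inj: "X\<in>\<Gamma> \<Longrightarrow> Y\<in>\<Gamma> \<Longrightarrow> \<Phi> X = \<Phi> Y \<Longrightarrow> X = Y"
  using Phi_bij by (metis bij_betw_def inj_onD)
lemma Phi_sadd: "X\<in>\<Gamma> \<Longrightarrow> Y\<in>\<Gamma> \<Longrightarrow> \<Phi> (sadd X Y) = sadd (\<Phi> X) (\<Phi> Y)"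
  using HB unfolding hom_bundle_def by (elim conjE) metis
lemma Phi_ssm: "f\<in>C \<Longrightarrow> X\<in>\<Gamma> \<Longrightarrow> \<Phi> (ssm f X) = ssm (pb \<phi> f) (\<Phi> X)"
  using HB unfolding hom_bundle_def by (elim conjE) metis

lemma K_bij: "bij_betw K \<Gamma> \<Gamma>" using APC unfolding almost_para_complex_def by (elim conjE)
lemma K_G: "X\<in>\<Gamma> \<Longrightarrow> K X \<in> \<Gamma>" using K_bij bij_betwE by blast
lemma J_G: "X\<in>\<Gamma> \<Longrightarrow> \<Phi> (K X) \<in> \<Gamma>" by (simp add: K_G Phi_G)
lemma JJ: "X\<in>\<Gamma> \<Longrightarrow> \<Phi> (K (\<Phi> (K X))) = X" using APC unfolding almost_para_complex_def by (elim conjE) metis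
lemma PhiK: "X\<in>\<Gamma> \<Longrightarrow> \<Phi> (K X) = K (\<Phi> X)" using APC unfolding almost_para_complex_def by (elim conjE) metis
lemma J_sadd: "X\<in>\<Gamma> \<Longrightarrow> Y\<in>\<Gamma> \<Longrightarrow> \<Phi> (K (sadd X Y)) = sadd (\<Phi> (K X)) (\<Phi> (K Y))"
  using APC unfolding almost_para_complex_def by (elim conjE) metis
lemma J_ssm: "f\<in>C \<Longrightarrow> X\<in>\<Gamma> \<Longrightarrow> \<Phi> (K (ssm f X)) = ssm f (\<Phi> (K X))"
  using APC unfolding almost_para_complex_def by (elim conjE) metis
lemma J_Phi: "X\<in>\<Gamma> \<Longrightarrow> \<Phi> (K (\<Phi> X)) = \<Phi> (\<Phi> (K X))" using PhiK by metis

lemma br_G: "X\<in>\<Gamma> \<Longrightarrow> Y\<in>\<Gamma> \<Longrightarrow> br X Y \<in> \<Gamma>" using HL unfolding hom_Lie_algebroid_def by (elim conjE) metis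
lemma br_Phi: "X\<in>\<Gamma> \<Longrightarrow> Y\<in>\<Gamma> \<Longrightarrow> \<Phi> (br X Y) = br (\<Phi> X) (\<Phi> Y)" using HL unfolding hom_Lie_algebroid_def by (elim conjE) metis
lemma jacobi: "X\<in>\<Gamma> \<Longrightarrow> Y\<in>\<Gamma> \<Longrightarrow> Z\<in>\<Gamma> \<Longrightarrow>
   sadd (sadd (br (\<Phi> X) (br Y Z)) (br (\<Phi> Y) (br Z X))) (br (\<Phi> Z) (br X Y)) = szero"
  using HL unfolding hom_Lie_algebroid_def by (elim conjE) metis
lemma aderiv: "X\<in>\<Gamma> \<Longrightarrow> phi_derivation C \<phi> (a X)" using HL unfolding hom_Lie_algebroid_def by (elim conjE) metis
lemma a_add: "X\<in>\<Gamma> \<Longrightarrow> f\<in>C \<Longrightarrow> h\<in>C \<Longrightarrow> a X (\<lambda>x. f x + h x) = (\<lambda>x. a X f x + a X h x)"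
  using aderiv[of X] unfolding phi_derivation_def by metis
lemma a_pb: "X\<in>\<Gamma> \<Longrightarrow> f\<in>C \<Longrightarrow> pb \<phi> (a X f) = a (\<Phi> X) (pb \<phi> f)" using HL unfolding hom_Lie_algebroid_def by (elim conjE) metis
lemma a_br: "X\<in>\<Gamma> \<Longrightarrow> Y\<in>\<Gamma> \<Longrightarrow> f\<in>C \<Longrightarrow>
        a (br X Y) (pb \<phi> f) = (\<lambda>x. a (\<Phi> X) (a Y f) x - a (\<Phi> Y) (a X f) x)"
  using HL unfolding hom_Lie_algebroid_def by (elim conjE) metis

lemma bil: "bilinear (g x)" using PM unfolding pseudo_metric_def by (elim conjE) metis
lemma gsym0: "\<forall>x. \<forall>u\<in>fib \<Gamma> x. \<forall>w\<in>fib \<Gamma> x. g x u w = g x w u"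
  using PM unfolding pseudo_metric_def by (elim conjE)
lemma nd0: "\<forall>x. \<forall>u\<in>fib \<Gamma> x. (\<forall>w\<in>fib \<Gamma> x. g x u w = 0) \<longrightarrow> u = 0"
  using PM unfolding pseudo_metric_def by (elim conjE)
lemma in_fib: "X\<in>\<Gamma> \<Longrightarrow> X x \<in> fib \<Gamma> x" unfolding fib_def by (rule image_eqI[OF refl])
lemma gsym: "X\<in>\<Gamma> \<Longrightarrow> Y\<in>\<Gamma> \<Longrightarrow> g x (X x) (Y x) = g x (Y x) (X x)"
  using gsym0 in_fib by blast
lemma nondeg0: assumes S: "S\<in>\<Gamma>" and H: "\<And>V. V\<in>\<Gamma> \<Longrightarrow> g x (S x) (V x) = 0" shows "S x = 0"
proof -
  have "\<forall>w\<in>fib \<Gamma> x. g x (S x) w = 0" using H unfolding fib_def by auto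
  then show ?thesis using nd0 in_fib[OF S] by blast
qed
lemma ipr_C: "X\<in>\<Gamma> \<Longrightarrow> Y\<in>\<Gamma> \<Longrightarrow> ipr g X Y \<in> C" using PM unfolding pseudo_metric_def by (elim conjE) metis
lemma ipr_Phi: "X\<in>\<Gamma> \<Longrightarrow> Y\<in>\<Gamma> \<Longrightarrow> ipr g (\<Phi> X) (\<Phi> Y) = pb \<phi> (ipr g X Y)" using PM unfolding pseudo_metric_def by (elim conjE) metis

lemma nab_G: "X\<in>\<Gamma> \<Longrightarrow> Y\<in>\<Gamma> \<Longrightarrow> nab X Y \<in> \<Gamma>" using LC unfolding hom_LC_connection_def by (elim conjE) metis
lemma nab_addl: "X\<in>\<Gamma> \<Longrightarrow> Y\<in>\<Gamma> \<Longrightarrow> Z\<in>\<Gamma> \<Longrightarrow> nab (sadd X Y) Z = sadd (nab X Z) (nab Y Z)" using LC unfolding hom_LC_connection_def by (elim conjE) metis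
lemma nab_addr: "X\<in>\<Gamma> \<Longrightarrow> Y\<in>\<Gamma> \<Longrightarrow> Z\<in>\<Gamma> \<Longrightarrow> nab Z (sadd X Y) = sadd (nab Z X) (nab Z Y)" using LC unfolding hom_LC_connection_def by (elim conjE) metis
lemma nab_constr: "X\<in>\<Gamma> \<Longrightarrow> Y\<in>\<Gamma> \<Longrightarrow> nab X (ssm (\<lambda>_. c) Y) = ssm (\<lambda>_. c) (nab X Y)" using LC unfolding hom_LC_connection_def by (elim conjE) metis
lemma nab_ssml: "f\<in>C \<Longrightarrow> X\<in>\<Gamma> \<Longrightarrow> Y\<in>\<Gamma> \<Longrightarrow> nab (ssm f X) Y = ssm (pb \<phi> f) (nab X Y)" using LC unfolding hom_LC_connection_def by (elim conjE) metis
lemma nab_leib: "f\<in>C \<Longrightarrow> X\<in>\<Gamma> \<Longrightarrow> Y\<in>\<Gamma> \<Longrightarrow>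
        nab X (ssm f Y) = sadd (ssm (pb \<phi> f) (nab X Y)) (ssm (a (\<Phi> X) f) (\<Phi> Y))" using LC unfolding hom_LC_connection_def by (elim conjE) metis
lemma tors: "X\<in>\<Gamma> \<Longrightarrow> Y\<in>\<Gamma> \<Longrightarrow> br X Y = sadd (nab X Y) (sneg (nab Y X))" using LC unfolding hom_LC_connection_def by (elim conjE) metis
lemma compat: "X\<in>\<Gamma> \<Longrightarrow> Y\<in>\<Gamma> \<Longrightarrow> Z\<in>\<Gamma> \<Longrightarrow>
        a (\<Phi> X) (ipr g Y Z) = (\<lambda>x. ipr g (nab X Y) (\<Phi> Z) x + ipr g (\<Phi> Y) (nab X Z) x)" using LC unfolding hom_LC_connection_def by (elim conjE) metis

lemma tors_pt: "X\<in>\<Gamma> \<Longrightarrow> Y\<in>\<Gamma> \<Longrightarrow> br X Y x = nab X Y x - nab Y X x"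
  using tors by (simp add: sadd_def sneg_def)
lemma nab_neg_r: "X\<in>\<Gamma> \<Longrightarrow> Y\<in>\<Gamma> \<Longrightarrow> nab X (sneg Y) = sneg (nab X Y)"
  using nab_constr sneg_eq by metis
lemma nab_sub_pt: "X\<in>\<Gamma> \<Longrightarrow> Y\<in>\<Gamma> \<Longrightarrow> Z\<in>\<Gamma> \<Longrightarrow> nab Z (sadd X (sneg Y)) x = nab Z X x - nab Z Y x"
  by (simp add: nab_addr sneg_G nab_neg_r) (simp add: sadd_def sneg_def)

lemma gadd_l: "g x (u + v) w = g x u w + g x v w" by (rule bilinear_ladd[OF bil])
lemma gadd_r: "g x w (u + v) = g x w u + g x w v" by (rule bilinear_radd[OF bil])
lemma gsub_l: "g x (u - v) w = g x u w - g x v w" by (rule bilinear_lsub[OF bil])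
lemma gsub_r: "g x w (u - v) = g x w u - g x w v" by (rule bilinear_rsub[OF bil])
lemma gmul_l: "g x (c *\<^sub>R u) w = c * g x u w" using bilinear_lmul[OF bil] by simp
lemma gmul_r: "g x w (c *\<^sub>R u) = c * g x w u" using bilinear_rmul[OF bil] by simp
lemma gneg_l: "g x (- u) w = - g x u w" by (rule bilinear_lneg[OF bil])
lemma gneg_r: "g x w (- u) = - g x w u" by (rule bilinear_rneg[OF bil])
lemmas glin = gadd_l gadd_r gsub_l gsub_r gmul_l gmul_r gneg_l gneg_r

lemma compat_pt: "X\<in>\<Gamma> \<Longrightarrow> Y\<in>\<Gamma> \<Longrightarrow> Z\<in>\<Gamma> \<Longrightarrow>
        a (\<Phi> X) (ipr g Y Z) x = g x (nab X Y x) (\<Phi> Z x) + g x (\<Phi> Y x) (nab X Z x)"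
  using compat by (simp add: ipr_def)

lemma koszul: assumes X: "X\<in>\<Gamma>" and Y: "Y\<in>\<Gamma>" and Z: "Z\<in>\<Gamma>"
  shows "2 * g x (nab X Y x) (\<Phi> Z x) = a (\<Phi> X) (ipr g Y Z) x + a (\<Phi> Y) (ipr g Z X) x
     - a (\<Phi> Z) (ipr g X Y) x + g x (br X Y x) (\<Phi> Z x) - g x (\<Phi> Y x) (br X Z x) - g x (\<Phi> X x) (br Y Z x)"
proof -
  have s1: "g x (nab X Y x) (\<Phi> Z x) = g x (\<Phi> Z x) (nab X Y x)" by (rule gsym) (auto simp: X Y Z nab_G Phi_G)
  have s2: "g x (nab Y Z x) (\<Phi> X x) = g x (\<Phi> X x) (nab Y Z x)" by (rule gsym) (auto simp: X Y Z nab_G Phi_G)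
  have s3: "g x (nab Z X x) (\<Phi> Y x) = g x (\<Phi> Y x) (nab Z X x)" by (rule gsym) (auto simp: X Y Z nab_G Phi_G)
  have s4: "g x (nab Y X x) (\<Phi> Z x) = g x (\<Phi> Z x) (nab Y X x)" by (rule gsym) (auto simp: X Y Z nab_G Phi_G)
  show ?thesis using X Y Z s1 s2 s3 s4
    by (simp add: compat_pt tors_pt glin)
qed

lemma nab_Phi: assumes X: "X\<in>\<Gamma>" and Y: "Y\<in>\<Gamma>" shows "nab (\<Phi> X) (\<Phi> Y) = \<Phi> (nab X Y)"
proof (rule ext)
  fix x
  have key: "g x (nab (\<Phi> X) (\<Phi> Y) x) (\<Phi> (\<Phi> Z) x) = g x (\<Phi> (nab X Y) x) (\<Phi> (\<Phi> Z) x)" if Z: "Z\<in>\<Gamma>" for Z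
  proof -
    have aP: "a (\<Phi> (\<Phi> U)) (ipr g (\<Phi> V) (\<Phi> W)) x = a (\<Phi> U) (ipr g V W) (\<phi> x)"
      if "U\<in>\<Gamma>" "V\<in>\<Gamma>" "W\<in>\<Gamma>" for U V W
      using that by (simp add: ipr_Phi a_pb[symmetric] Phi_G ipr_C) (simp add: pb_def)
    have gP: "g x (\<Phi> U x) (\<Phi> V x) = g (\<phi> x) (U (\<phi> x)) (V (\<phi> x))" if "U\<in>\<Gamma>" "V\<in>\<Gamma>" for U V
      using fun_cong[OF ipr_Phi[OF that], of x] by (simp add: ipr_def pb_def)
    have k1: "2 * g x (nab (\<Phi> X) (\<Phi> Y) x) (\<Phi> (\<Phi> Z) x) = 2 * g (\<phi> x) (nab X Y (\<phi> x)) (\<Phi> Z (\<phi> x))"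
      apply (subst koszul[OF Phi_G[OF X] Phi_G[OF Y] Phi_G[OF Z]])
      apply (subst koszul[OF X Y Z])
      using X Y Z by (simp add: aP br_Phi[symmetric] gP br_G Phi_G)
    show ?thesis using k1 gP X Y Z by (simp add: nab_G Phi_G)
  qed
  have S: "sadd (nab (\<Phi> X) (\<Phi> Y)) (sneg (\<Phi> (nab X Y))) \<in> \<Gamma>"
    using X Y by (simp add: sadd_G sneg_G nab_G Phi_G)
  have "sadd (nab (\<Phi> X) (\<Phi> Y)) (sneg (\<Phi> (nab X Y))) x = 0"
  proof (rule nondeg0[OF S])
    fix V assume V: "V\<in>\<Gamma>"
    then obtain Z1 where Z1: "Z1\<in>\<Gamma>" "V = \<Phi> Z1" using Phi_surj by blast
    then obtain Z where Z: "Z\<in>\<Gamma>" "Z1 = \<Phi> Z" using Phi_surj by blast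
    show "g x (sadd (nab (\<Phi> X) (\<Phi> Y)) (sneg (\<Phi> (nab X Y))) x) (V x) = 0"
      using key[OF Z(1)] Z Z1 by (simp add: sadd_def sneg_def glin)
  qed
  then show "nab (\<Phi> X) (\<Phi> Y) x = \<Phi> (nab X Y) x" by (simp add: sadd_def sneg_def)
qed

definition Es :: "real \<Rightarrow> ('m \<Rightarrow> 'v) set" where
  "Es s = {X\<in>\<Gamma>. \<Phi> (K X) = ssm (\<lambda>_. s) X}"

lemma E_G: "X \<in> Es s \<Longrightarrow> X\<in>\<Gamma>" by (simp add: Es_def)
lemma E_J: "X \<in> Es s \<Longrightarrow> \<Phi> (K X) = ssm (\<lambda>_. s) X" by (simp add: Es_def)
lemma E_sadd: "X \<in> Es s \<Longrightarrow> Y \<in> Es s \<Longrightarrow> sadd X Y \<in> Es s"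
  by (auto simp: Es_def J_sadd sadd_G) (auto simp: sadd_def ssm_def algebra_simps)
lemma E_ssm: "f\<in>C \<Longrightarrow> X \<in> Es s \<Longrightarrow> ssm f X \<in> Es s"
  by (auto simp: Es_def J_ssm ssm_G) (auto simp: ssm_def algebra_simps)
lemma E_sneg: "X \<in> Es s \<Longrightarrow> sneg X \<in> Es s" by (metis E_ssm constC sneg_eq)
lemma E_zero: "szero \<in> Es s"
proof -
  have "szero = ssm (\<lambda>_. 0) (szero::'m\<Rightarrow>'v)" by (simp add: ssm_def szero_def)
  moreover have "\<Phi> (K (ssm (\<lambda>_. 0) szero)) = ssm (\<lambda>_. s) (ssm (\<lambda>_. 0) szero)"
    by (simp add: J_ssm constC szero_G) (simp add: ssm_def)
  ultimately show ?thesis by (simp add: Es_def szero_G)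
qed
lemma E_Phi: "X \<in> Es s \<Longrightarrow> \<Phi> X \<in> Es s"
  by (auto simp: Es_def J_Phi Phi_ssm constC Phi_G) (simp add: pb_def comp_def)
lemma E_Phi_surj: assumes Y: "Y \<in> Es s" shows "\<exists>X\<in>Es s. Y = \<Phi> X"
proof -
  obtain X where X: "X\<in>\<Gamma>" "Y = \<Phi> X" using Phi_surj E_G[OF Y] by blast
  have "\<Phi> (\<Phi> (K X)) = \<Phi> (ssm (\<lambda>_. s) X)"
    using E_J[OF Y] X by (simp add: J_Phi[symmetric] Phi_ssm constC) (simp add: pb_def comp_def)
  then have "\<Phi> (K X) = ssm (\<lambda>_. s) X" using Phi_inj X J_G ssm_G constC by blast
  then show ?thesis using X by (auto simp: Es_def)
qed
lemma E_bij: "bij_betw \<Phi> (Es s) (Es s)"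
  unfolding bij_betw_def
proof
  show "inj_on \<Phi> (Es s)" by (meson E_G Phi_inj inj_onI)
  show "\<Phi> ` Es s = Es s" using E_Phi E_Phi_surj by blast
qed
lemma E_nab: assumes X: "X\<in>\<Gamma>" and Y: "Y \<in> Es s" shows "nab X Y \<in> Es s"
proof -
  have YG: "Y\<in>\<Gamma>" using Y by (rule E_G)
  have "\<Phi> (K (nab X Y)) = nab X (\<Phi> (K Y))" using nabK[OF X YG] by simp
  also have "\<dots> = nab X (ssm (\<lambda>_. s) Y)" using E_J[OF Y] by simp
  also have "\<dots> = ssm (\<lambda>_. s) (nab X Y)" using nab_constr[OF X YG] by simp
  finally show ?thesis using nab_G[OF X YG] unfolding Es_def by simp
qed
lemma E_br: "X \<in> Es s \<Longrightarrow> Y \<in> Es s \<Longrightarrow> br X Y \<in> Es s"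
  by (simp add: tors E_G E_sadd E_sneg E_nab)
lemma E_iso: assumes ss: "s * s = (1::real)" and X: "X \<in> Es s" and Y: "Y \<in> Es s" shows "g x (X x) (Y x) = 0"
proof -
  have "g x (s *\<^sub>R X x) (s *\<^sub>R Y x) = - g x (X x) (Y x)"
    using fun_cong[OF isoax[OF E_G[OF X] E_G[OF Y]], of x] E_J[OF X] E_J[OF Y] by (simp add: ipr_def ssm_def)
  then have "(s * s) * g x (X x) (Y x) = - g x (X x) (Y x)" by (simp add: glin)
  then show ?thesis using ss by simp
qed
lemma E_dec: assumes ss: "s * s = (1::real)" and V: "V\<in>\<Gamma>"
  shows "sadd V (ssm (\<lambda>_. s) (\<Phi> (K V))) \<in> Es s"
proof -
  have "\<Phi> (K (sadd V (ssm (\<lambda>_. s) (\<Phi> (K V))))) = sadd (\<Phi> (K V)) (ssm (\<lambda>_. s) V)"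
    using V by (simp add: J_sadd J_ssm ssm_G J_G constC JJ)
  also have "\<dots> = ssm (\<lambda>_. s) (sadd V (ssm (\<lambda>_. s) (\<Phi> (K V))))"
    using ss by (simp add: sadd_def ssm_def algebra_simps)
  finally show ?thesis using V by (simp add: Es_def sadd_G ssm_G J_G constC)
qed

definition R where "R X Y Z = sadd (sadd (nab (br X Y) (\<Phi> Z)) (sneg (nab (\<Phi> X) (nab Y Z)))) (nab (\<Phi> Y) (nab X Z))"

lemma R_pt: "R X Y Z x = nab (br X Y) (\<Phi> Z) x - nab (\<Phi> X) (nab Y Z) x + nab (\<Phi> Y) (nab X Z) x"
  by (simp add: R_def sadd_def sneg_def)
lemma R_G: "X\<in>\<Gamma> \<Longrightarrow> Y\<in>\<Gamma> \<Longrightarrow> Z\<in>\<Gamma> \<Longrightarrow> R X Y Z \<in> \<Gamma>"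
  by (simp add: R_def sadd_G sneg_G nab_G br_G Phi_G)
lemma R_E: "X\<in>\<Gamma> \<Longrightarrow> Y\<in>\<Gamma> \<Longrightarrow> Z\<in>Es s \<Longrightarrow> R X Y Z \<in> Es s"
  by (simp add: R_def E_sadd E_sneg E_nab br_G Phi_G E_Phi)

lemma jac_pt: "X\<in>\<Gamma> \<Longrightarrow> Y\<in>\<Gamma> \<Longrightarrow> Z\<in>\<Gamma> \<Longrightarrow>
   br (\<Phi> X) (br Y Z) x + br (\<Phi> Y) (br Z X) x + br (\<Phi> Z) (br X Y) x = 0"
  using fun_cong[OF jacobi, of X Y Z x] by (simp add: sadd_def szero_def)

lemma bianchi: assumes X: "X\<in>\<Gamma>" and Y: "Y\<in>\<Gamma>" and Z: "Z\<in>\<Gamma>"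
  shows "R X Y Z x + R Y Z X x + R Z X Y x = 0"
proof -
  have t: "nab (br U V) (\<Phi> W) x = nab (\<Phi> W) (nab U V) x - nab (\<Phi> W) (nab V U) x - br (\<Phi> W) (br U V) x"
    if "U\<in>\<Gamma>" "V\<in>\<Gamma>" "W\<in>\<Gamma>" for U V W
  proof -
    have 1: "br (\<Phi> W) (br U V) x = nab (\<Phi> W) (br U V) x - nab (br U V) (\<Phi> W) x"
      using that by (simp add: tors_pt br_G Phi_G)
    have 2: "nab (\<Phi> W) (br U V) x = nab (\<Phi> W) (nab U V) x - nab (\<Phi> W) (nab V U) x"
      using that by (simp add: tors[of U V] nab_sub_pt nab_G Phi_G)
    show ?thesis using 1 2 by (simp add: algebra_simps)
  qed
  show ?thesis using jac_pt[OF X Y Z, of x] X Y Z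
    by (simp add: R_pt t algebra_simps)
qed

lemma rskew: assumes X: "X\<in>\<Gamma>" and Y: "Y\<in>\<Gamma>" and Z: "Z\<in>\<Gamma>" and W: "W\<in>\<Gamma>"
  shows "g x (R X Y Z x) (\<Phi> (\<Phi> W) x) + g x (\<Phi> (\<Phi> Z) x) (R X Y W x) = 0"
proof -
  have A: "a (\<Phi> (br X Y)) (ipr g (\<Phi> Z) (\<Phi> W)) x = g x (nab (br X Y) (\<Phi> Z) x) (\<Phi> (\<Phi> W) x)
      + g x (\<Phi> (\<Phi> Z) x) (nab (br X Y) (\<Phi> W) x)"
    using X Y Z W by (simp add: compat_pt br_G Phi_G)
  have B: "a (\<Phi> (br X Y)) (ipr g (\<Phi> Z) (\<Phi> W)) x =
     a (\<Phi> (\<Phi> X)) (a (\<Phi> Y) (ipr g Z W)) x - a (\<Phi> (\<Phi> Y)) (a (\<Phi> X) (ipr g Z W)) x"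
    using X Y Z W by (simp add: ipr_Phi br_Phi a_br Phi_G ipr_C)
  have C: "a (\<Phi> (\<Phi> U)) (a (\<Phi> V) (ipr g Z W)) x =
     g x (nab (\<Phi> U) (nab V Z) x) (\<Phi> (\<Phi> W) x) + g x (\<Phi> (nab V Z) x) (\<Phi> (nab U W) x)
     + g x (\<Phi> (nab U Z) x) (\<Phi> (nab V W) x) + g x (\<Phi> (\<Phi> Z) x) (nab (\<Phi> U) (nab V W) x)"
    if U: "U\<in>\<Gamma>" and V: "V\<in>\<Gamma>" for U V
  proof -
    have "a (\<Phi> (\<Phi> U)) (a (\<Phi> V) (ipr g Z W)) =
       a (\<Phi> (\<Phi> U)) (\<lambda>x. ipr g (nab V Z) (\<Phi> W) x + ipr g (\<Phi> Z) (nab V W) x)"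
      using U V Z W by (simp add: compat)
    also have "\<dots> = (\<lambda>x. a (\<Phi> (\<Phi> U)) (ipr g (nab V Z) (\<Phi> W)) x + a (\<Phi> (\<Phi> U)) (ipr g (\<Phi> Z) (nab V W)) x)"
      using U V Z W by (simp add: a_add Phi_G ipr_C nab_G)
    finally show ?thesis
      using U V Z W by (simp add: compat_pt Phi_G nab_G nab_Phi)
  qed
  show ?thesis using A B C[OF X Y] C[OF Y X] X Y Z W
    by (simp add: R_pt glin)
qed

lemma flat: assumes ss: "s * s = (1::real)" and X: "X\<in>Es s" and Y: "Y\<in>Es s" and Z: "Z\<in>Es s"
  shows "R X Y Z x = 0"
proof -
  have ss': "(-s) * (-s) = (1::real)" using ss by simp
  have XG: "X\<in>\<Gamma>" and YG: "Y\<in>\<Gamma>" and ZG: "Z\<in>\<Gamma>" using X Y Z E_G by auto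
  have m: "g x (R X Y Z x) (\<Phi> (\<Phi> W) x) = 0" if W: "W \<in> Es (-s)" for W
  proof -
    have WG: "W\<in>\<Gamma>" using W E_G by auto
    have "g x (R X Y Z x) (\<Phi> (\<Phi> W) x) = - g x (R X Y W x) (\<Phi> (\<Phi> Z) x)"
      using rskew[OF XG YG ZG WG, of x] gsym[of "R X Y W" "\<Phi> (\<Phi> Z)" x] XG YG ZG WG
      by (simp add: R_G Phi_G)
    also have "R X Y W x = - R Y W X x - R W X Y x"
      using bianchi[OF XG YG WG, of x] by (simp add: algebra_simps eq_neg_iff_add_eq_0)
    also have "g x (- R Y W X x - R W X Y x) (\<Phi> (\<Phi> Z) x) = 0"
      using E_iso[OF ss R_E[OF YG WG X] E_Phi[OF E_Phi[OF Z]], of x]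
        E_iso[OF ss R_E[OF WG XG Y] E_Phi[OF E_Phi[OF Z]], of x]
      by (simp add: glin)
    finally show ?thesis by simp
  qed
  show ?thesis
  proof (rule nondeg0)
    show "R X Y Z \<in> \<Gamma>" using XG YG ZG R_G by auto
    fix V assume V: "V\<in>\<Gamma>"
    define P where "P = sadd V (ssm (\<lambda>_. s) (\<Phi> (K V)))"
    define Q where "Q = sadd V (ssm (\<lambda>_. -s) (\<Phi> (K V)))"
    have P: "P \<in> Es s" unfolding P_def by (rule E_dec[OF ss V])
    have Q: "Q \<in> Es (-s)" unfolding Q_def by (rule E_dec[OF ss' V])
    obtain W1 where W1: "W1 \<in> Es (-s)" "Q = \<Phi> W1" using E_Phi_surj[OF Q] by blast
    obtain W where W: "W \<in> Es (-s)" "W1 = \<Phi> W" using E_Phi_surj[OF W1(1)] by blast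
    have "V x = (1/2) *\<^sub>R (P x + Q x)"
      by (simp add: P_def Q_def sadd_def ssm_def algebra_simps scaleR_2[symmetric] del: scaleR_2)
    moreover have "g x (R X Y Z x) (P x) = 0"
      by (rule E_iso[OF ss R_E[OF XG YG Z] P])
    moreover have "g x (R X Y Z x) (Q x) = 0" using m[OF W(1)] W W1 by simp
    ultimately show "g x (R X Y Z x) (V x) = 0" by (simp add: glin)
  qed
qed

lemma E_HB: "hom_bundle C \<phi> (Es s) \<Phi>"
  unfolding hom_bundle_def vbundle_def
  using E_zero E_sadd E_ssm E_bij Phi_sadd Phi_ssm E_G by blast

lemma br_skew: "X\<in>\<Gamma> \<Longrightarrow> Y\<in>\<Gamma> \<Longrightarrow> br X Y = sneg (br Y X)"
  using HL unfolding hom_Lie_algebroid_def by (elim conjE) metis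
lemma br_addl: "X\<in>\<Gamma> \<Longrightarrow> Y\<in>\<Gamma> \<Longrightarrow> Z\<in>\<Gamma> \<Longrightarrow> br (sadd X Y) Z = sadd (br X Z) (br Y Z)"
  using HL unfolding hom_Lie_algebroid_def by (elim conjE) metis
lemma br_addr: "X\<in>\<Gamma> \<Longrightarrow> Y\<in>\<Gamma> \<Longrightarrow> Z\<in>\<Gamma> \<Longrightarrow> br Z (sadd X Y) = sadd (br Z X) (br Z Y)"
  using HL unfolding hom_Lie_algebroid_def by (elim conjE) metis
lemma br_cl: "X\<in>\<Gamma> \<Longrightarrow> Y\<in>\<Gamma> \<Longrightarrow> br (ssm (\<lambda>_. c) X) Y = ssm (\<lambda>_. c) (br X Y)"
  using HL unfolding hom_Lie_algebroid_def by (elim conjE) metis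
lemma br_cr: "X\<in>\<Gamma> \<Longrightarrow> Y\<in>\<Gamma> \<Longrightarrow> br X (ssm (\<lambda>_. c) Y) = ssm (\<lambda>_. c) (br X Y)"
  using HL unfolding hom_Lie_algebroid_def by (elim conjE) metis
lemma a_sadd: "X\<in>\<Gamma> \<Longrightarrow> Y\<in>\<Gamma> \<Longrightarrow> f\<in>C \<Longrightarrow> a (sadd X Y) f = (\<lambda>x. a X f x + a Y f x)"
  using HL unfolding hom_Lie_algebroid_def by (elim conjE) metis
lemma a_ssm: "h\<in>C \<Longrightarrow> X\<in>\<Gamma> \<Longrightarrow> f\<in>C \<Longrightarrow> a (ssm h X) f = (\<lambda>x. h x * a X f x)"
  using HL unfolding hom_Lie_algebroid_def by (elim conjE) metis
lemma br_leib: "X\<in>\<Gamma> \<Longrightarrow> Y\<in>\<Gamma> \<Longrightarrow> f\<in>C \<Longrightarrow>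
        br X (ssm f Y) = sadd (ssm (pb \<phi> f) (br X Y)) (ssm (a (\<Phi> X) f) (\<Phi> Y))"
  using HL unfolding hom_Lie_algebroid_def by (elim conjE) metis

lemma E_HL: "hom_Lie_algebroid C \<phi> (Es s) \<Phi> br a"
  unfolding hom_Lie_algebroid_def
  apply (intro conjI)
  subgoal by (rule E_HB)
  subgoal by (metis E_br)
  subgoal by (metis br_skew E_G)
  subgoal by (metis br_addl E_G)
  subgoal by (metis br_addr E_G)
  subgoal by (metis br_cl E_G)
  subgoal by (metis br_cr E_G)
  subgoal by (metis br_Phi E_G)
  subgoal by (metis jacobi E_G)
  subgoal by (metis aderiv E_G)
  subgoal by (metis a_sadd E_G)
  subgoal by (metis a_ssm E_G)
  subgoal by (metis br_leib E_G)
  subgoal by (metis a_pb E_G)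
  subgoal by (metis a_br E_G)
  done

lemma E_rep: assumes ss: "s * s = (1::real)"
  shows "hom_representation C \<phi> (Es s) \<Phi> br a (Es s) \<Phi> \<Phi> nab"
proof -
  have curv: "nab (br X Y) (\<Phi> e) = sadd (nab (\<Phi> X) (nab Y e)) (sneg (nab (\<Phi> Y) (nab X e)))"
    if "X \<in> Es s" "Y \<in> Es s" "e \<in> Es s" for X Y e
  proof
    fix x
    have "R X Y e x = 0" by (rule flat[OF ss that])
    then show "nab (br X Y) (\<Phi> e) x = sadd (nab (\<Phi> X) (nab Y e)) (sneg (nab (\<Phi> Y) (nab X e))) x"
      by (simp add: R_pt sadd_def sneg_def algebra_simps eq_neg_iff_add_eq_0)
  qed
  show ?thesis unfolding hom_representation_def
    apply (intro conjI)
    subgoal by (rule E_HL)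
    subgoal by (rule E_HB)
    subgoal by (rule E_bij)
    subgoal by (metis Phi_sadd E_G)
    subgoal by (metis Phi_ssm E_G)
    subgoal by (metis E_nab E_G)
    subgoal by (metis nab_addr E_G)
    subgoal by (metis nab_constr E_G)
    subgoal by (metis nab_ssml E_G)
    subgoal by (metis nab_leib E_G)
    subgoal by (metis nab_Phi E_G)
    subgoal by (metis curv)
    done
qed

end

theorem mainTheorem8:
  fixes C :: "('m \<Rightarrow> real) set" and \<phi> :: "'m \<Rightarrow> 'm"
    and \<Gamma> :: "('m \<Rightarrow> 'v::euclidean_space) set"
    and \<Phi> :: "('m \<Rightarrow> 'v) \<Rightarrow> ('m \<Rightarrow> 'v)"
    and br :: "('m \<Rightarrow> 'v) \<Rightarrow> ('m \<Rightarrow> 'v) \<Rightarrow> ('m \<Rightarrow> 'v)"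
    and a :: "('m \<Rightarrow> 'v) \<Rightarrow> ('m \<Rightarrow> real) \<Rightarrow> ('m \<Rightarrow> real)"
    and K :: "('m \<Rightarrow> 'v) \<Rightarrow> ('m \<Rightarrow> 'v)"
    and g :: "'m \<Rightarrow> 'v \<Rightarrow> 'v \<Rightarrow> real"
    and nab :: "('m \<Rightarrow> 'v) \<Rightarrow> ('m \<Rightarrow> 'v) \<Rightarrow> ('m \<Rightarrow> 'v)"
  assumes "para_Kaehler C \<phi> \<Gamma> \<Phi> br a K g nab"
  shows "hom_representation C \<phi> (eig_plus \<Gamma> \<Phi> K) \<Phi> br a (eig_plus \<Gamma> \<Phi> K) \<Phi> \<Phi> nab \<and>
     hom_representation C \<phi> (eig_minus \<Gamma> \<Phi> K) \<Phi> br a (eig_minus \<Gamma> \<Phi> K) \<Phi> \<Phi> nab"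
proof -
  interpret P: PK C \<phi> \<Gamma> \<Phi> br a K g nab by (rule PK.intro[OF assms])
  have e1: "eig_plus \<Gamma> \<Phi> K = P.Es 1"
    unfolding eig_plus_def P.Es_def by (auto simp: ssm_def)
  have e2: "eig_minus \<Gamma> \<Phi> K = P.Es (-1)"
    unfolding eig_minus_def P.Es_def by (auto simp: ssm_def sneg_def)
  show ?thesis using P.E_rep[of 1] P.E_rep[of "-1"] e1 e2 by simp
qed

end
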